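(* Let $p\in(0,1)$ and let $(\lambda_n)_{n\ge1}$ be a sequence with $\lambda_1=1$ and $0\le\lambda_n\le\lambda_{n-1}$ for all $n>1$. Let $r_1,r_2,\dots$ be $\{0,1\}$-valued random variables with $\Pr(r_1=1)=p$ and, for every $n\ge2$, $\Pr(r_n=1\mid r_1,\dots,r_{n-1})=\lambda_n p+(1-\lambda_n)\bar p_{n-1}$, where $\bar p_m=\frac1m\sum_{i=1}^m r_i$. If $\bar p_n$ is consistent, i.e. $\lim_{n\to\infty}\Pr(|\bar p_n-p|>\epsilon)=0$ for every $\epsilon>0$, then $\lim_{n\to\infty}\sum_{i=1}^n\lambda_i^2=\infty$. *)

theory Defs
  imports "HOL-Probability.Probability"
begin

definition pbar :: "(nat \<Rightarrow> 'a \<Rightarrow> real) \<Rightarrow> nat \<Rightarrow> 'a \<Rightarrow> real" where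
  "pbar r m \<omega> = (\<Sum>i=1..m. r i \<omega>) / real m"

definition hist_event :: "'a measure \<Rightarrow> (nat \<Rightarrow> 'a \<Rightarrow> real) \<Rightarrow> nat \<Rightarrow> (nat \<Rightarrow> real) \<Rightarrow> 'a set" where
  "hist_event M r m x = {\<omega> \<in> space M. \<forall>i\<in>{1..m}. r i \<omega> = x i}"

end

theory Submission imports Defs begin

definition Hs :: "nat \<Rightarrow> (nat \<Rightarrow> real) set" where
  "Hs n = {x. (\<forall>i\<in>{1..n}. x i \<in> {0,1}) \<and> (\<forall>i. i \<notin> {1..n} \<longrightarrow> x i = 0)}"

lemma Hs_0: "Hs 0 = {\<lambda>_. 0}"
  unfolding Hs_def by auto

lemma Hs_Suc: "Hs (Suc n) = (\<lambda>(x,b). x(Suc n := b)) ` (Hs n \<times> {0,1})"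
proof (intro equalityI subsetI)
  fix z assume z: "z \<in> Hs (Suc n)"
  have "z(Suc n := 0) \<in> Hs n" using z unfolding Hs_def by auto
  moreover have "z = (z(Suc n := 0))(Suc n := z (Suc n))" by simp
  moreover have "z (Suc n) \<in> {0,1}" using z unfolding Hs_def by auto
  ultimately show "z \<in> (\<lambda>(x,b). x(Suc n := b)) ` (Hs n \<times> {0,1})"
    by (metis (no_types, lifting) SigmaI case_prod_conv image_eqI)
next
  fix z assume "z \<in> (\<lambda>(x,b). x(Suc n := b)) ` (Hs n \<times> {0::real,1})"
  then obtain x b where "x \<in> Hs n" "b \<in> {0,1}" "z = x(Suc n := b)" by auto
  then show "z \<in> Hs (Suc n)" unfolding Hs_def by auto
qed

lemma Hs_inj: "inj_on (\<lambda>(x,b). x(Suc n := b)) (Hs n \<times> {0,1})"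
proof (rule inj_onI, clarify)
  fix x b y c assume "x \<in> Hs n" "y \<in> Hs n"
  assume h: "x(Suc n := b) = y(Suc n := c)"
  have "x (Suc n) = 0" "y (Suc n) = 0" using \<open>x \<in> Hs n\<close> \<open>y \<in> Hs n\<close> unfolding Hs_def by auto
  moreover have "x i = y i" if "i \<noteq> Suc n" for i using fun_cong[OF h, of i] that by simp
  moreover have "b = c" using fun_cong[OF h, of "Suc n"] by simp
  ultimately show "x = y \<and> b = c" by (metis ext)
qed

lemma Hs_finite: "finite (Hs n)"
  by (induction n) (auto simp: Hs_0 Hs_Suc)

lemma sum_Hs_Suc:
  "(\<Sum>z\<in>Hs (Suc n). f z) = (\<Sum>x\<in>Hs n. f (x(Suc n := 0)) + f (x(Suc n := 1)))"
proof -
  have "(\<Sum>z\<in>Hs (Suc n). f z) = (\<Sum>y\<in>Hs n \<times> {0,1}. f ((\<lambda>(x,b). x(Suc n := b)) y))"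
    unfolding Hs_Suc by (rule sum.reindex[OF Hs_inj, unfolded comp_def])
  also have "\<dots> = (\<Sum>x\<in>Hs n. \<Sum>b\<in>{0,1}. f (x(Suc n := b)))"
    by (subst sum.cartesian_product) (simp add: case_prod_unfold)
  also have "\<dots> = (\<Sum>x\<in>Hs n. f (x(Suc n := 0)) + f (x(Suc n := 1)))" by simp
  finally show ?thesis .
qed

lemma Hs_sum_bounds:
  assumes "x \<in> Hs n" shows "0 \<le> (\<Sum>i=1..n. x i)" "(\<Sum>i=1..n. x i) \<le> real n"
proof -
  have h: "\<And>i. i \<in> {1..n} \<Longrightarrow> 0 \<le> x i \<and> x i \<le> 1"
  proof -
    fix i assume "i \<in> {1..n}" then have "x i \<in> {0,1}" using assms unfolding Hs_def by auto
    then show "0 \<le> x i \<and> x i \<le> 1" by auto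
  qed
  show "0 \<le> (\<Sum>i=1..n. x i)" using h by (intro sum_nonneg) auto
  have "(\<Sum>i=1..n. x i) \<le> (\<Sum>i=1..n. (1::real))" using h by (intro sum_mono) auto
  then show "(\<Sum>i=1..n. x i) \<le> real n" by simp
qed

lemma sum_upd_Suc: "x \<in> Hs n \<Longrightarrow> (\<Sum>i=1..Suc n. (x(Suc n := b)) i) = (\<Sum>i=1..n. x i) + b"
proof -
  have "(\<Sum>i=1..n. (x(Suc n := b)) i) = (\<Sum>i=1..n. x i)" by (intro sum.cong) auto
  then show ?thesis by (simp add: sum.cl_ivl_Suc)
qed


locale A6 = prob_space M for M :: "'a measure" +
  fixes r :: "nat \<Rightarrow> 'a \<Rightarrow> real" and lam :: "nat \<Rightarrow> real" and p :: real
  assumes p0: "0 < p" and p1: "p < 1" and lam1: "lam 1 = 1"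
    and lam_mono: "\<And>n. n > 1 \<Longrightarrow> 0 \<le> lam n \<and> lam n \<le> lam (n - 1)"
    and rmeas: "\<And>i. i \<ge> 1 \<Longrightarrow> r i \<in> borel_measurable M"
    and r01: "\<And>i \<omega>. i \<ge> 1 \<Longrightarrow> \<omega> \<in> space M \<Longrightarrow> r i \<omega> \<in> {0, 1}"
    and first: "measure M {\<omega> \<in> space M. r 1 \<omega> = 1} = p"
    and cond: "\<And>n x. n \<ge> 2 \<Longrightarrow> (\<forall>i\<in>{1..n-1}. x i \<in> {0, 1}) \<Longrightarrow>
           measure M (hist_event M r (n - 1) x \<inter> {\<omega> \<in> space M. r n \<omega> = 1})
             = (lam n * p + (1 - lam n) * ((\<Sum>i=1..n-1. x i) / real (n - 1)))
               * measure M (hist_event M r (n - 1) x)"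
begin

definition P where "P n x = measure M (hist_event M r n x)"
definition T where "T n x = (\<Sum>i=1..n. x i) - real n * p"
definition A where "A n = (\<Sum>x\<in>Hs n. P n x * (T n x)\<^sup>2)"
definition q where "q n x = lam (Suc n) * p + (1 - lam (Suc n)) * ((\<Sum>i=1..n. x i) / real n)"

lemma lam_bounds: "n \<ge> 1 \<Longrightarrow> 0 \<le> lam n \<and> lam n \<le> 1"
proof (induction n rule: dec_induct)
  case base then show ?case using lam1 by simp
next
  case (step n) then show ?case using lam_mono[of "Suc n"] by auto
qed

lemma req_sets: "i \<ge> 1 \<Longrightarrow> {\<omega> \<in> space M. r i \<omega> = c} \<in> sets M"
proof -
  assume "i \<ge> 1"
  then have "r i \<in> borel_measurable M" by (rule rmeas)
  then have "r i -` {c} \<inter> space M \<in> sets M" by (rule measurable_sets) simp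
  moreover have "r i -` {c} \<inter> space M = {\<omega> \<in> space M. r i \<omega> = c}" by auto
  ultimately show ?thesis by simp
qed

lemma hist_sets: "hist_event M r n x \<in> sets M"
  unfolding hist_event_def
  by (intro sets.sets_Collect_finite_All) (auto intro: req_sets)

lemma hist_0: "hist_event M r 0 x = space M"
  unfolding hist_event_def by auto

lemma hist_Suc: "hist_event M r (Suc n) (x(Suc n := b)) = hist_event M r n x \<inter> {\<omega>\<in>space M. r (Suc n) \<omega> = b}"
  unfolding hist_event_def
  by (auto simp: le_Suc_eq)

lemma P_one: assumes "x \<in> Hs n"
  shows "measure M (hist_event M r n x \<inter> {\<omega>\<in>space M. r (Suc n) \<omega> = 1}) = q n x * P n x"
proof (cases "n = 0")
  case True
  then show ?thesis using first lam1 by (simp add: hist_0 q_def P_def prob_space Int_absorb1)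
next
  case False
  have "\<forall>i\<in>{1..Suc n - 1}. x i \<in> {0, 1}" using assms unfolding Hs_def by auto
  from cond[OF _ this] False show ?thesis by (simp add: q_def P_def)
qed

lemma P_zero: assumes "x \<in> Hs n"
  shows "measure M (hist_event M r n x \<inter> {\<omega>\<in>space M. r (Suc n) \<omega> = 0}) = P n x - q n x * P n x"
proof -
  have "hist_event M r n x \<inter> {\<omega>\<in>space M. r (Suc n) \<omega> = 0} =
        hist_event M r n x - (hist_event M r n x \<inter> {\<omega>\<in>space M. r (Suc n) \<omega> = 1})"
    using r01[of "Suc n"] unfolding hist_event_def by fastforce
  then show ?thesis using P_one[OF assms]
    by (simp add: finite_measure_Diff hist_sets req_sets sets.Int P_def)
qed

lemma q_bounds: assumes "x \<in> Hs n" shows "0 \<le> q n x" "q n x \<le> 1"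
proof -
  have l: "0 \<le> lam (Suc n)" "lam (Suc n) \<le> 1" using lam_bounds[of "Suc n"] by auto
  have s: "0 \<le> (\<Sum>i=1..n. x i) / real n" "(\<Sum>i=1..n. x i) / real n \<le> 1"
    using Hs_sum_bounds[OF assms] by (auto simp: divide_le_eq)
  show "0 \<le> q n x" unfolding q_def using l s p0 by (intro add_nonneg_nonneg mult_nonneg_nonneg) auto
  have "q n x \<le> lam (Suc n) * 1 + (1 - lam (Suc n)) * 1" unfolding q_def
    using l s p1 by (intro add_mono mult_left_mono) auto
  then show "q n x \<le> 1" by simp
qed

lemma A_Suc: "A (Suc n) = (\<Sum>x\<in>Hs n. P n x * ((T n x + q n x - p)\<^sup>2 + q n x * (1 - q n x)))"
proof -
  have "A (Suc n) = (\<Sum>x\<in>Hs n. P (Suc n) (x(Suc n := 0)) * (T (Suc n) (x(Suc n := 0)))\<^sup>2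
      + P (Suc n) (x(Suc n := 1)) * (T (Suc n) (x(Suc n := 1)))\<^sup>2)"
    unfolding A_def by (rule sum_Hs_Suc)
  also have "\<dots> = (\<Sum>x\<in>Hs n. P n x * ((T n x + q n x - p)\<^sup>2 + q n x * (1 - q n x)))"
  proof (rule sum.cong[OF refl])
    fix x assume x: "x \<in> Hs n"
    have P0: "P (Suc n) (x(Suc n := 0)) = P n x - q n x * P n x"
      using P_zero[OF x] by (simp add: P_def hist_Suc)
    have P1: "P (Suc n) (x(Suc n := 1)) = q n x * P n x"
      using P_one[OF x] by (simp add: P_def hist_Suc)
    have T0: "T (Suc n) (x(Suc n := b)) = T n x + b - p" for b
      using sum_upd_Suc[OF x] by (simp add: T_def algebra_simps)
    show "P (Suc n) (x(Suc n := 0)) * (T (Suc n) (x(Suc n := 0)))\<^sup>2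
      + P (Suc n) (x(Suc n := 1)) * (T (Suc n) (x(Suc n := 1)))\<^sup>2
      = P n x * ((T n x + q n x - p)\<^sup>2 + q n x * (1 - q n x))"
      unfolding P0 P1 T0 by (simp add: power2_eq_square algebra_simps)
  qed
  finally show ?thesis .
qed

end

lemma exp_bound: fixes x :: real assumes "0 \<le> x" "x \<le> 1/2" shows "exp (-4*x) \<le> (1-x)\<^sup>2"
proof -
  have "x * x \<le> x * (1/2)" using assms by (intro mult_left_mono) auto
  then have "-2*x \<le> ln (1 - x)" using ln_one_minus_pos_lower_bound[OF assms]
    by (simp add: power2_eq_square)
  then have "exp (-2*x) \<le> exp (ln (1 - x))" by simp
  moreover have "exp (ln (1 - x)) = 1 - x" using assms by simp
  ultimately have "exp (-2*x) \<le> 1 - x" by simp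
  then have "(exp (-2*x))\<^sup>2 \<le> (1-x)\<^sup>2" by (intro power_mono) auto
  moreover have "(exp (-2*x))\<^sup>2 = exp (-4*x)" by (simp add: power2_eq_square exp_add[symmetric])
  ultimately show ?thesis by simp
qed

lemma inv_sq_sum: "n \<ge> 1 \<Longrightarrow> (\<Sum>k=1..n. 1 / (real k)\<^sup>2) \<le> 2 - 1 / real n"
proof (induction n rule: dec_induct)
  case base then show ?case by simp
next
  case (step n)
  have a: "1 / (real (Suc n))\<^sup>2 \<le> 1 / (real n * real (Suc n))"
    using step(1) by (intro divide_left_mono) (auto simp: power2_eq_square intro!: mult_right_mono)
  have b: "1 / (real n * real (Suc n)) = 1 / real n - 1 / real (Suc n)"
    using step(1) by (simp add: field_simps)
  have "1 / (real (Suc n))\<^sup>2 \<le> 1 / real n - 1 / real (Suc n)" using a b by simp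
  then show ?case using step by (simp add: sum.cl_ivl_Suc)
qed

context A6 begin

lemma P_nonneg: "0 \<le> P n x" unfolding P_def by simp

lemma A_nonneg: "0 \<le> A n" unfolding A_def by (intro sum_nonneg mult_nonneg_nonneg P_nonneg) auto

lemma A_1: "A (Suc 0) = p * (1 - p)"
  unfolding A_Suc Hs_0 using lam1 by (simp add: P_def hist_0 prob_space T_def q_def)

lemma A_rec: assumes "n \<ge> 1"
  shows "((real n + 1 - lam (Suc n)) / real n)\<^sup>2 * A n \<le> A (Suc n)"
proof -
  let ?c = "(real n + 1 - lam (Suc n)) / real n"
  have "?c\<^sup>2 * A n = (\<Sum>x\<in>Hs n. P n x * (T n x + q n x - p)\<^sup>2)"
    unfolding A_def sum_distrib_left
  proof (rule sum.cong[OF refl])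
    fix x assume x: "x \<in> Hs n"
    have "T n x + q n x - p = T n x * ?c" using assms
      by (simp add: T_def q_def field_simps)
    then show "?c\<^sup>2 * (P n x * (T n x)\<^sup>2) = P n x * (T n x + q n x - p)\<^sup>2"
      by (simp add: power2_eq_square)
  qed
  also have "\<dots> \<le> A (Suc n)" unfolding A_Suc
  proof (intro sum_mono mult_left_mono P_nonneg)
    fix x assume "x \<in> Hs n"
    then have "0 \<le> q n x * (1 - q n x)" using q_bounds[of x n] by simp
    then show "(T n x + q n x - p)\<^sup>2 \<le> (T n x + q n x - p)\<^sup>2 + q n x * (1 - q n x)" by simp
  qed
  finally show ?thesis .
qed

definition B where "B n = A n / (real n)\<^sup>2"

lemma B_nonneg: "0 \<le> B n" unfolding B_def using A_nonneg by simp

lemma B_rec: assumes "n \<ge> 1"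
  shows "(1 - lam (Suc n) / (real n + 1))\<^sup>2 * B n \<le> B (Suc n)"
proof -
  have "(1 - lam (Suc n) / (real n + 1))\<^sup>2 * B n
      = ((real n + 1 - lam (Suc n)) / real n)\<^sup>2 * A n / (real n + 1)\<^sup>2"
    using assms by (simp add: B_def field_simps power2_eq_square)
  also have "\<dots> \<le> A (Suc n) / (real n + 1)\<^sup>2"
    using A_rec[OF assms] by (intro divide_right_mono) auto
  finally show ?thesis by (simp add: B_def add.commute)
qed

definition hv where "hv n \<omega> = (\<lambda>i. if i \<in> {1..n} then r i \<omega> else 0)"

lemma hv_Hs: "\<omega> \<in> space M \<Longrightarrow> hv n \<omega> \<in> Hs n"
  unfolding Hs_def hv_def using r01 by auto

lemma hist_iff: "\<omega> \<in> space M \<Longrightarrow> x \<in> Hs n \<Longrightarrow> (\<omega> \<in> hist_event M r n x \<longleftrightarrow> hv n \<omega> = x)"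
  unfolding Hs_def hv_def hist_event_def by (auto simp: fun_eq_iff)

lemma partition: "measure M {\<omega>\<in>space M. \<Phi> (hv n \<omega>)} = (\<Sum>x\<in>{x\<in>Hs n. \<Phi> x}. P n x)"
proof -
  have "{\<omega>\<in>space M. \<Phi> (hv n \<omega>)} = (\<Union>x\<in>{x\<in>Hs n. \<Phi> x}. hist_event M r n x)"
  proof (intro equalityI subsetI)
    fix \<omega> assume "\<omega> \<in> {\<omega>\<in>space M. \<Phi> (hv n \<omega>)}"
    then show "\<omega> \<in> (\<Union>x\<in>{x\<in>Hs n. \<Phi> x}. hist_event M r n x)"
      using hist_iff[of \<omega> "hv n \<omega>" n] hv_Hs[of \<omega> n] by auto
  next
    fix \<omega> assume "\<omega> \<in> (\<Union>x\<in>{x\<in>Hs n. \<Phi> x}. hist_event M r n x)"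
    then obtain x where "x \<in> Hs n" "\<Phi> x" "\<omega> \<in> hist_event M r n x" by auto
    moreover then have "\<omega> \<in> space M" unfolding hist_event_def by auto
    ultimately show "\<omega> \<in> {\<omega>\<in>space M. \<Phi> (hv n \<omega>)}" using hist_iff by auto
  qed
  moreover have "measure M (\<Union>x\<in>{x\<in>Hs n. \<Phi> x}. hist_event M r n x) = (\<Sum>x\<in>{x\<in>Hs n. \<Phi> x}. P n x)"
    unfolding P_def
  proof (rule finite_measure_finite_Union)
    show "finite {x\<in>Hs n. \<Phi> x}" using Hs_finite by simp
    show "(\<lambda>x. hist_event M r n x) ` {x\<in>Hs n. \<Phi> x} \<subseteq> sets M" using hist_sets by auto
    show "disjoint_family_on (\<lambda>x. hist_event M r n x) {x\<in>Hs n. \<Phi> x}"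
      unfolding disjoint_family_on_def
    proof (intro ballI impI)
      fix x y assume "x \<in> {x\<in>Hs n. \<Phi> x}" "y \<in> {x\<in>Hs n. \<Phi> x}" "x \<noteq> y"
      then show "hist_event M r n x \<inter> hist_event M r n y = {}"
        using hist_iff[of _ x n] hist_iff[of _ y n] unfolding hist_event_def by blast
    qed
  qed
  ultimately show ?thesis by simp
qed

lemma sumP: "(\<Sum>x\<in>Hs n. P n x) = 1"
  using partition[of "\<lambda>_. True" n] by (simp add: prob_space)

lemma pbar_hv: "pbar r n \<omega> = (\<Sum>i=1..n. hv n \<omega> i) / real n"
  unfolding pbar_def hv_def by (intro arg_cong[where f="\<lambda>s. s / real n"] sum.cong) auto

lemma B_le: assumes "n \<ge> 1" "\<epsilon> > 0"
  shows "B n \<le> \<epsilon>\<^sup>2 + measure M {\<omega> \<in> space M. \<bar>pbar r n \<omega> - p\<bar> > \<epsilon>}"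
proof -
  define g where "g x = (\<Sum>i=1..n. x i) / real n - p" for x :: "nat \<Rightarrow> real"
  have Bg: "B n = (\<Sum>x\<in>Hs n. P n x * (g x)\<^sup>2)"
    unfolding B_def A_def sum_divide_distrib
  proof (rule sum.cong[OF refl])
    fix x assume "x \<in> Hs n"
    have "T n x / real n = g x" using assms by (simp add: T_def g_def field_simps)
    then have "(T n x)\<^sup>2 / (real n)\<^sup>2 = (g x)\<^sup>2" by (metis power_divide)
    then show "P n x * (T n x)\<^sup>2 / (real n)\<^sup>2 = P n x * (g x)\<^sup>2"
      by (metis times_divide_eq_right)
  qed
  have "(\<Sum>x\<in>Hs n. P n x * (g x)\<^sup>2) \<le> (\<Sum>x\<in>Hs n. \<epsilon>\<^sup>2 * P n x + (if \<bar>g x\<bar> > \<epsilon> then P n x else 0))"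
  proof (rule sum_mono)
    fix x assume x: "x \<in> Hs n"
    have "0 \<le> (\<Sum>i=1..n. x i) / real n" "(\<Sum>i=1..n. x i) / real n \<le> 1"
      using Hs_sum_bounds[OF x] by (auto simp: divide_le_eq)
    then have g1: "\<bar>g x\<bar> \<le> 1" using p0 p1 unfolding g_def by auto
    show "P n x * (g x)\<^sup>2 \<le> \<epsilon>\<^sup>2 * P n x + (if \<bar>g x\<bar> > \<epsilon> then P n x else 0)"
    proof (cases "\<bar>g x\<bar> > \<epsilon>")
      case True
      have "(g x)\<^sup>2 \<le> 1" using g1 by (metis abs_le_square_iff abs_one one_power2)
      then have "P n x * (g x)\<^sup>2 \<le> P n x" using P_nonneg mult_left_le by blast
      then show ?thesis using True P_nonneg[of n x] by (simp add: add_increasing)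
    next
      case False
      then have "\<bar>g x\<bar> \<le> \<bar>\<epsilon>\<bar>" using assms by simp
      then have "(g x)\<^sup>2 \<le> \<epsilon>\<^sup>2" by (simp add: abs_le_square_iff)
      then have "P n x * (g x)\<^sup>2 \<le> P n x * \<epsilon>\<^sup>2" using P_nonneg[of n x] by (rule mult_left_mono)
      then show ?thesis using False by (simp add: mult.commute)
    qed
  qed
  also have "\<dots> = \<epsilon>\<^sup>2 + (\<Sum>x\<in>{x\<in>Hs n. \<bar>g x\<bar> > \<epsilon>}. P n x)"
    by (simp add: sum.distrib sum_distrib_left[symmetric] sumP sum.inter_filter Hs_finite)
  also have "(\<Sum>x\<in>{x\<in>Hs n. \<bar>g x\<bar> > \<epsilon>}. P n x) = measure M {\<omega> \<in> space M. \<bar>g (hv n \<omega>)\<bar> > \<epsilon>}"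
    by (rule partition[symmetric])
  also have "{\<omega> \<in> space M. \<bar>g (hv n \<omega>)\<bar> > \<epsilon>} = {\<omega> \<in> space M. \<bar>pbar r n \<omega> - p\<bar> > \<epsilon>}"
    by (simp add: g_def pbar_hv)
  finally show ?thesis using Bg by simp
qed

lemma B_lower: assumes "n \<ge> 1"
  shows "p * (1 - p) * exp (-4 * (\<Sum>k=1..n. (lam k)\<^sup>2 + 1 / (real k)\<^sup>2)) \<le> B n"
  using assms
proof (induction n rule: dec_induct)
  case base
  have "exp (-4 * (1 + 1)) \<le> (1::real)" by simp
  then show ?case using A_1 p0 p1 lam1 by (simp add: B_def)
next
  case (step n)
  let ?x = "lam (Suc n) / (real n + 1)"
  let ?t = "(lam (Suc n))\<^sup>2 + 1 / (real (Suc n))\<^sup>2"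
  have l: "0 \<le> lam (Suc n)" "lam (Suc n) \<le> 1" using lam_bounds[of "Suc n"] by auto
  have x0: "0 \<le> ?x" using l by simp
  have x1: "?x \<le> 1/2" using l step(1) by (simp add: field_simps)
  have "?x \<le> ?t"
  proof -
    have "2 * (lam (Suc n) * (1 / (real n + 1))) \<le> (lam (Suc n))\<^sup>2 + (1 / (real n + 1))\<^sup>2"
      using sum_squares_bound[of "lam (Suc n)" "1 / (real n + 1)"] by (simp add: mult.assoc)
    moreover have "0 \<le> lam (Suc n) * (1 / (real n + 1))" using l by simp
    ultimately show ?thesis by (simp add: add.commute power_divide)
  qed
  then have e: "exp (-4 * ?t) \<le> (1 - ?x)\<^sup>2"
  proof -
    have "exp (-4 * ?t) \<le> exp (-4 * ?x)" using \<open>?x \<le> ?t\<close> by simp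
    then show ?thesis using exp_bound[OF x0 x1] by (rule order_trans)
  qed
  have "p * (1 - p) * exp (-4 * (\<Sum>k=1..Suc n. (lam k)\<^sup>2 + 1 / (real k)\<^sup>2))
      = exp (-4 * ?t) * (p * (1 - p) * exp (-4 * (\<Sum>k=1..n. (lam k)\<^sup>2 + 1 / (real k)\<^sup>2)))"
  proof -
    have "(\<Sum>k=1..Suc n. (lam k)\<^sup>2 + 1 / (real k)\<^sup>2) = (\<Sum>k=1..n. (lam k)\<^sup>2 + 1 / (real k)\<^sup>2) + ?t"
      by (simp add: sum.cl_ivl_Suc)
    then have "exp (-4 * (\<Sum>k=1..Suc n. (lam k)\<^sup>2 + 1 / (real k)\<^sup>2))
       = exp (-4 * ?t) * exp (-4 * (\<Sum>k=1..n. (lam k)\<^sup>2 + 1 / (real k)\<^sup>2))"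
      by (simp only: distrib_left exp_add mult.commute)
    then show ?thesis by (simp only: ac_simps)
  qed
  also have "\<dots> \<le> (1 - ?x)\<^sup>2 * B n"
    using e step(3) by (intro mult_mono) (auto simp: p0 p1 less_imp_le)
  also have "\<dots> \<le> B (Suc n)" using B_rec step(1) by simp
  finally show ?case .
qed

end

theorem theoremA6:
  fixes M :: "'a measure" and r :: "nat \<Rightarrow> 'a \<Rightarrow> real"
    and lam :: "nat \<Rightarrow> real" and p :: real
  assumes "prob_space M"
    and "0 < p" and "p < 1"
    and "lam 1 = 1"
    and "\<And>n. n > 1 \<Longrightarrow> 0 \<le> lam n \<and> lam n \<le> lam (n - 1)"
    and "\<And>i. i \<ge> 1 \<Longrightarrow> r i \<in> borel_measurable M"
    and "\<And>i \<omega>. i \<ge> 1 \<Longrightarrow> \<omega> \<in> space M \<Longrightarrow> r i \<omega> \<in> {0, 1}"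
    and "measure M {\<omega> \<in> space M. r 1 \<omega> = 1} = p"
    and "\<And>n x. n \<ge> 2 \<Longrightarrow> (\<forall>i\<in>{1..n-1}. x i \<in> {0, 1}) \<Longrightarrow>
           measure M (hist_event M r (n - 1) x \<inter> {\<omega> \<in> space M. r n \<omega> = 1})
             = (lam n * p + (1 - lam n) * ((\<Sum>i=1..n-1. x i) / real (n - 1)))
               * measure M (hist_event M r (n - 1) x)"
    and cons: "\<And>\<epsilon>. \<epsilon> > 0 \<Longrightarrow>
           (\<lambda>n. measure M {\<omega> \<in> space M. \<bar>pbar r n \<omega> - p\<bar> > \<epsilon>}) \<longlonglongrightarrow> 0"
  shows "filterlim (\<lambda>n. \<Sum>i=1..n. (lam i)\<^sup>2) at_top sequentially"
proof (rule ccontr)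
  interpret A6 M r lam p
    by (rule A6.intro[OF assms(1) A6_axioms.intro[OF assms(2-9)]])
  let ?f = "\<lambda>n. \<Sum>i=1..n. (lam i)\<^sup>2"
  assume nf: "\<not> filterlim ?f at_top sequentially"
  have mono: "?f m \<le> ?f n" if "m \<le> n" for m n
    using that by (intro sum_mono2) auto
  obtain L where L: "\<And>n. ?f n \<le> L"
  proof -
    from nf obtain Z where Z: "\<not> eventually (\<lambda>n. Z \<le> ?f n) sequentially"
      unfolding filterlim_at_top by blast
    have "?f n \<le> Z" for n
    proof (rule ccontr)
      assume "\<not> ?f n \<le> Z"
      then have "Z \<le> ?f m" if "m \<ge> n" for m using mono[OF that] by linarith
      then have "\<forall>m\<ge>n. Z \<le> ?f m" by blast
      then show False using Z unfolding eventually_sequentially by blast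
    qed
    then show ?thesis using that by blast
  qed
  define c where "c = p * (1 - p) * exp (-4 * (L + 2))"
  have c0: "0 < c" unfolding c_def using p0 p1 by simp
  have Bc: "c \<le> B n" if "n \<ge> 1" for n
  proof -
    have "(\<Sum>k=1..n. (lam k)\<^sup>2 + 1 / (real k)\<^sup>2) = ?f n + (\<Sum>k=1..n. 1 / (real k)\<^sup>2)"
      by (simp add: sum.distrib)
    also have "\<dots> \<le> L + 2"
    proof -
      have "0 \<le> 1 / real n" by simp
      then have "(\<Sum>k=1..n. 1 / (real k)\<^sup>2) \<le> 2" using inv_sq_sum[OF that] by linarith
      then show ?thesis using L[of n] by linarith
    qed
    finally have "exp (-4 * (L + 2)) \<le> exp (-4 * (\<Sum>k=1..n. (lam k)\<^sup>2 + 1 / (real k)\<^sup>2))"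
      by simp
    then have "c \<le> p * (1 - p) * exp (-4 * (\<Sum>k=1..n. (lam k)\<^sup>2 + 1 / (real k)\<^sup>2))"
      unfolding c_def using p0 p1 by (intro mult_left_mono) auto
    also have "\<dots> \<le> B n" by (rule B_lower[OF that])
    finally show ?thesis .
  qed
  define \<epsilon> where "\<epsilon> = sqrt (c / 2)"
  have e0: "\<epsilon> > 0" unfolding \<epsilon>_def using c0 by simp
  have e2: "\<epsilon>\<^sup>2 = c / 2" unfolding \<epsilon>_def using c0 by simp
  have "eventually (\<lambda>n. measure M {\<omega> \<in> space M. \<bar>pbar r n \<omega> - p\<bar> > \<epsilon>} < c / 2) sequentially"
    using order_tendstoD(2)[OF cons[OF e0], of "c/2"] c0 by simp
  then obtain N where N: "\<And>n. n \<ge> N \<Longrightarrow> measure M {\<omega> \<in> space M. \<bar>pbar r n \<omega> - p\<bar> > \<epsilon>} < c / 2"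
    unfolding eventually_sequentially by blast
  let ?n = "max N 1"
  have "c \<le> B ?n" by (rule Bc) simp
  also have "\<dots> \<le> \<epsilon>\<^sup>2 + measure M {\<omega> \<in> space M. \<bar>pbar r ?n \<omega> - p\<bar> > \<epsilon>}"
    by (rule B_le) (auto simp: e0)
  also have "\<dots> < c" using N[of ?n] e2 by simp
  finally show False by simp
qed

end
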